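(* Let $d\ge2$ and $m\in\mathbb R$, and set $\theta=\frac m4(d-1)$. For every smooth $f$ on $\mathbb R_+^d$ and every $x=(x_1,\dots,x_{d-1})$ with $x_i\ge0$, $\sum_{j=1}^{d-1}x_j\le1$, setting $x_d=1-\sum_{j=1}^{d-1}x_j$ and $g(x_1,\dots,x_{d-1})=f(x_1,\dots,x_{d-1},1-\sum_{j=1}^{d-1}x_j)$, one has $\mathscr L_d^{BEP(m)}f(x_1,\dots,x_{d-1},x_d)=\mathscr L^{WF}_{d,\theta}g(x_1,\dots,x_{d-1})$. That is, the Brownian Energy process with parameter $m$ on the complete graph with $d$ vertices started with $\sum_{i=1}^dx_i=1$ coincides with the $d$-types Wright–Fisher diffusion with symmetric parent-independent mutation at rate $\theta=\frac m4(d-1)$.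
   Context: The Brownian Energy process BEP($m$) on the complete graph with $d$ vertices is the diffusion on $\mathbb R_+^d$ with generator $\mathscr L_d^{BEP(m)}f(y)=\frac12\sum_{1\le i<j\le d}y_iy_j(\partial_{y_i}-\partial_{y_j})^2f(y)-\frac m4\sum_{1\le i<j\le d}(y_i-y_j)(\partial_{y_i}-\partial_{y_j})f(y)$. The $d$-types Wright–Fisher model with symmetric parent-independent mutation at rate $\theta$ is the diffusion on the simplex $\{x\in\mathbb R^{d-1}: x_i\ge0,\ \sum_i x_i\le1\}$ with generator $\mathscr L^{WF}_{d,\theta}g(x)=\sum_{i=1}^{d-1}\frac12x_i(1-x_i)\partial^2_{x_i}g(x)-\sum_{1\le i<j\le d-1}x_ix_j\partial_{x_i}\partial_{x_j}g(x)+\frac{\theta}{d-1}\sum_{i=1}^{d-1}(1-dx_i)\partial_{x_i}g(x)$. *)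

theory Defs
  imports "HOL-Analysis.Analysis" "HOL-Library.Option_ord"
begin

definition pd :: "'n::finite \<Rightarrow> (real^'n \<Rightarrow> real) \<Rightarrow> real^'n \<Rightarrow> real" where
  "pd i F y = deriv (\<lambda>t. F (y + t *\<^sub>R axis i 1)) 0"

fun pds :: "'n::finite list \<Rightarrow> (real^'n \<Rightarrow> real) \<Rightarrow> real^'n \<Rightarrow> real" where
  "pds [] F = F"
| "pds (i # is) F = pd i (pds is F)"

definition smooth_on :: "(real^('n::finite)) set \<Rightarrow> (real^'n \<Rightarrow> real) \<Rightarrow> bool" where
  "smooth_on U F \<longleftrightarrow> open U \<and>
     (\<forall>is. continuous_on U (pds is F) \<and>
        (\<forall>i. \<forall>y\<in>U. (\<lambda>t. pds is F (y + t *\<^sub>R axis i 1)) differentiable (at 0)))"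

text \<open>Generator of BEP(m) on the complete graph with vertex set the finite linearly
  ordered type 'd (d = CARD('d)).\<close>
definition L_BEP :: "real \<Rightarrow> (real^('d::{finite,linorder}) \<Rightarrow> real) \<Rightarrow> real^('d::{finite,linorder}) \<Rightarrow> real" where
  "L_BEP m f y =
     (1/2) * (\<Sum>(i,j)\<in>{(i,j). i < j}. y$i * y$j *
        (pd i (pd i f) y - pd i (pd j f) y - pd j (pd i f) y + pd j (pd j f) y))
     - (m/4) * (\<Sum>(i,j)\<in>{(i,j). i < j}. (y$i - y$j) * (pd i f y - pd j f y))"

text \<open>Generator of the d-types Wright-Fisher diffusion with symmetric parent-independent
  mutation at rate theta, acting on functions of the d-1 = CARD('n) coordinates
  (so d = CARD('n) + 1).\<close>
definition L_WF :: "real \<Rightarrow> (real^('n::{finite,linorder}) \<Rightarrow> real) \<Rightarrow> real^('n::{finite,linorder}) \<Rightarrow> real" where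
  "L_WF \<theta> g x =
     (\<Sum>i\<in>UNIV. (1/2) * x$i * (1 - x$i) * pd i (pd i g) x)
     - (\<Sum>(i,j)\<in>{(i,j). i < j}. x$i * x$j * pd i (pd j g) x)
     + (\<theta> / real CARD('n)) * (\<Sum>i\<in>UNIV. (1 - (real CARD('n) + 1) * x$i) * pd i g x)"

text \<open>Embedding of (x_1,...,x_{d-1}) as (x_1,...,x_{d-1},1 - sum x_j); the extra
  coordinate x_d is indexed by None.\<close>
definition lift :: "real^('n::finite) \<Rightarrow> real^('n option)" where
  "lift x = (\<chi> k. case k of Some i \<Rightarrow> x$i | None \<Rightarrow> 1 - (\<Sum>j\<in>UNIV. x$j))"

end

theory Submission
  imports Defs
begin


lemma ax_deriv:
  fixes F :: "real^'m::finite \<Rightarrow> real"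
  assumes "\<forall>y\<in>U. (\<lambda>t. F (y + t *\<^sub>R axis i 1)) differentiable (at 0)"
    and "q + \<sigma> *\<^sub>R axis i 1 \<in> U"
  shows "((\<lambda>s. F (q + s *\<^sub>R axis i 1)) has_real_derivative pd i F (q + \<sigma> *\<^sub>R axis i 1)) (at \<sigma>)"
proof -
  have "((\<lambda>t. F ((q + \<sigma> *\<^sub>R axis i 1) + t *\<^sub>R axis i 1)) has_real_derivative pd i F (q + \<sigma> *\<^sub>R axis i 1)) (at 0)"
    using assms unfolding pd_def by (simp add: DERIV_deriv_iff_real_differentiable)
  moreover have "(\<lambda>t. F ((q + \<sigma> *\<^sub>R axis i 1) + t *\<^sub>R axis i 1)) = (\<lambda>t. (\<lambda>s. F (q + s *\<^sub>R axis i 1)) (t + \<sigma>))"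
    by (simp add: algebra_simps)
  ultimately show ?thesis using DERIV_shift[of "\<lambda>s. F (q + s *\<^sub>R axis i 1)" _ 0 \<sigma>] by simp
qed

lemma norm_ax: "norm (axis i (1::real) :: real^'m::finite) = 1"
  by simp

lemma dir_deriv:
  fixes F :: "real^'m::finite \<Rightarrow> real"
  assumes U: "open U" and p: "p \<in> U"
    and d: "\<forall>i. \<forall>y\<in>U. (\<lambda>t. F (y + t *\<^sub>R axis i 1)) differentiable (at 0)"
    and c: "continuous_on U (pd b F)"
  shows "((\<lambda>t. F (p + t *\<^sub>R axis a 1 - t *\<^sub>R axis b 1)) has_real_derivative (pd a F p - pd b F p)) (at 0)"
proof -
  obtain r where r: "r > 0" "ball p r \<subseteq> U" using U p open_contains_ball by blast
  define X where "X = ball (0::real) (r/2)"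
  have dpv: "\<And>v. dist p (p + v) = norm v" by (simp add: dist_norm)
  define ea where "ea = (axis a 1 :: real^'m)"
  define eb where "eb = (axis b 1 :: real^'m)"
  have inU: "p + s *\<^sub>R ea + t *\<^sub>R eb \<in> U" if "s \<in> X" "t \<in> X" for s t
  proof -
    have "norm (s *\<^sub>R ea + t *\<^sub>R eb) \<le> \<bar>s\<bar> + \<bar>t\<bar>"
      using norm_triangle_ineq[of "s *\<^sub>R ea" "t *\<^sub>R eb"] by (simp add: ea_def eb_def)
    also have "\<dots> < r" using that by (auto simp: X_def)
    finally have nr: "norm (s *\<^sub>R ea + t *\<^sub>R eb) < r" .
    have "p + (s *\<^sub>R ea + t *\<^sub>R eb) \<in> ball p r" unfolding mem_ball dpv by (rule nr)
    then have "p + s *\<^sub>R ea + t *\<^sub>R eb \<in> ball p r" by (simp only: add.assoc)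
    then show ?thesis using r(2) by blast
  qed
  define \<psi> where "\<psi> s t = F (p + s *\<^sub>R ea + t *\<^sub>R eb)" for s t
  define fy where "fy s t = blinfun_scaleR_left (pd b F (p + s *\<^sub>R ea + t *\<^sub>R eb))" for s t
  have X0: "0 \<in> X" using r by (simp add: X_def)
  have fx: "((\<lambda>s. \<psi> s 0) has_derivative (*) (pd a F p)) (at 0 within X)"
  proof -
    have "((\<lambda>s. F (p + s *\<^sub>R ea)) has_real_derivative pd a F (p + 0 *\<^sub>R ea)) (at 0)"
      unfolding ea_def by (rule ax_deriv) (use d p in auto)
    then show ?thesis unfolding \<psi>_def has_field_derivative_def
      by (simp add: has_derivative_at_withinI)
  qed
  have fy: "((\<lambda>t. \<psi> s t) has_derivative blinfun_apply (fy s t)) (at t within X)"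
    if "s \<in> X" "t \<in> X" for s t
  proof -
    have "((\<lambda>u. F ((p + s *\<^sub>R ea) + u *\<^sub>R eb)) has_real_derivative pd b F ((p + s *\<^sub>R ea) + t *\<^sub>R eb)) (at t)"
      unfolding eb_def by (rule ax_deriv) (use d inU[OF that] in \<open>auto simp: eb_def\<close>)
    moreover have "blinfun_apply (fy s t) = (*) (pd b F (p + s *\<^sub>R ea + t *\<^sub>R eb))"
      by (auto simp: fy_def fun_eq_iff)
    ultimately show ?thesis unfolding \<psi>_def has_field_derivative_def
      by (simp add: has_derivative_at_withinI)
  qed
  have cont: "continuous_on (X \<times> X) (\<lambda>z. pd b F (p + fst z *\<^sub>R ea + snd z *\<^sub>R eb))"
    by (rule continuous_on_compose2[OF c]) (auto intro!: continuous_intros inU)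
  have "continuous_on (X \<times> X) (\<lambda>(s, t). fy s t)"
    unfolding fy_def case_prod_beta
    by (intro continuous_intros cont)
  then have fyc: "continuous (at (0, 0) within X \<times> X) (\<lambda>(s, t). fy s t)"
    using X0 continuous_on_eq_continuous_within by blast
  have "((\<lambda>(s, t). \<psi> s t) has_derivative (\<lambda>(tx, ty). pd a F p * tx + fy 0 0 ty)) (at (0, 0) within X \<times> X)"
    apply (rule has_derivative_partialsI[where f=\<psi> and fx="(*) (pd a F p)" and fy=fy and X=X and Y=X and x=0 and y=0])
    using fx fy fyc X0 by (simp_all add: X_def)
  moreover have "at ((0::real), (0::real)) within X \<times> X = at (0, 0)"
    by (rule at_within_open) (use X0 in \<open>auto simp: X_def intro!: open_Times\<close>)
  ultimately have D: "((\<lambda>(s, t). \<psi> s t) has_derivative (\<lambda>(tx, ty). pd a F p * tx + fy 0 0 ty)) (at (0, 0))"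
    by simp
  have L: "((\<lambda>t. (t, -t)) has_derivative (\<lambda>h. (h, -h))) (at (0::real))"
    by (auto intro!: derivative_eq_intros)
  from has_derivative_compose[OF L, simplified, OF D]
  have "((\<lambda>t. \<psi> t (-t)) has_derivative (\<lambda>h. pd a F p * h + fy 0 0 (-h))) (at 0)" by simp
  moreover have "(\<lambda>h. pd a F p * h + fy 0 0 (-h)) = (*) (pd a F p - pd b F p)"
    by (auto simp: fun_eq_iff fy_def algebra_simps)
  moreover have "(\<lambda>t. \<psi> t (-t)) = (\<lambda>t. F (p + t *\<^sub>R axis a 1 - t *\<^sub>R axis b 1))"
    by (auto simp: fun_eq_iff \<psi>_def ea_def eb_def)
  ultimately show ?thesis by (simp add: has_field_derivative_def)
qed

lemma mixed_mvt:
  fixes F :: "real^'m::finite \<Rightarrow> real"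
  assumes d0: "\<forall>i. \<forall>y\<in>U. (\<lambda>t. F (y + t *\<^sub>R axis i 1)) differentiable (at 0)"
    and dk: "\<forall>i. \<forall>y\<in>U. (\<lambda>t. pd k F (y + t *\<^sub>R axis i 1)) differentiable (at 0)"
    and h: "h > 0"
    and box: "\<And>s t. 0 \<le> s \<Longrightarrow> s \<le> h \<Longrightarrow> 0 \<le> t \<Longrightarrow> t \<le> h \<Longrightarrow> p + s *\<^sub>R axis k 1 + t *\<^sub>R axis l 1 \<in> U"
  shows "\<exists>\<sigma> \<tau>. 0 < \<sigma> \<and> \<sigma> < h \<and> 0 < \<tau> \<and> \<tau> < h \<and>
     F (p + h *\<^sub>R axis k 1 + h *\<^sub>R axis l 1) - F (p + h *\<^sub>R axis k 1) - F (p + h *\<^sub>R axis l 1) + F p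
     = h * h * pd l (pd k F) (p + \<sigma> *\<^sub>R axis k 1 + \<tau> *\<^sub>R axis l 1)"
proof -
  define ek where "ek = (axis k 1 :: real^'m)"
  define el where "el = (axis l 1 :: real^'m)"
  define u where "u s = F ((p + h *\<^sub>R el) + s *\<^sub>R ek) - F (p + s *\<^sub>R ek)" for s
  have du: "DERIV u s :> (pd k F ((p + h *\<^sub>R el) + s *\<^sub>R ek) - pd k F (p + s *\<^sub>R ek))"
    if "0 \<le> s" "s \<le> h" for s
  proof -
    have i1: "(p + h *\<^sub>R el) + s *\<^sub>R ek \<in> U"
      using box[of s h] that h by (simp add: ek_def el_def add_ac)
    have i2: "p + s *\<^sub>R ek \<in> U"
      using box[of s 0] that h by (simp add: ek_def el_def)
    show ?thesis unfolding u_def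
      by (intro DERIV_diff) (unfold ek_def; rule ax_deriv; use d0 i1 i2 in \<open>auto simp: ek_def\<close>)+
  qed
  obtain \<sigma> where \<sigma>: "0 < \<sigma>" "\<sigma> < h"
    "u h - u 0 = (h - 0) * (pd k F ((p + h *\<^sub>R el) + \<sigma> *\<^sub>R ek) - pd k F (p + \<sigma> *\<^sub>R ek))"
    using MVT2[of 0 h u "\<lambda>s. pd k F ((p + h *\<^sub>R el) + s *\<^sub>R ek) - pd k F (p + s *\<^sub>R ek)"] h du
    by auto
  define v where "v t = pd k F ((p + \<sigma> *\<^sub>R ek) + t *\<^sub>R el)" for t
  have dv: "DERIV v t :> pd l (pd k F) ((p + \<sigma> *\<^sub>R ek) + t *\<^sub>R el)" if "0 \<le> t" "t \<le> h" for t
  proof -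
    have "(p + \<sigma> *\<^sub>R ek) + t *\<^sub>R el \<in> U"
      using box[of \<sigma> t] that \<sigma> by (simp add: ek_def el_def)
    then show ?thesis unfolding v_def el_def
      by (intro ax_deriv) (use dk in \<open>auto simp: el_def\<close>)
  qed
  obtain \<tau> where \<tau>: "0 < \<tau>" "\<tau> < h"
    "v h - v 0 = (h - 0) * pd l (pd k F) ((p + \<sigma> *\<^sub>R ek) + \<tau> *\<^sub>R el)"
    using MVT2[of 0 h v "\<lambda>t. pd l (pd k F) ((p + \<sigma> *\<^sub>R ek) + t *\<^sub>R el)"] h dv
    by auto
  have "F (p + h *\<^sub>R ek + h *\<^sub>R el) - F (p + h *\<^sub>R ek) - F (p + h *\<^sub>R el) + F p = u h - u 0"
    by (simp add: u_def add_ac)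
  also have "\<dots> = h * (v h - v 0)"
    using \<sigma>(3) by (simp add: v_def add_ac)
  also have "\<dots> = h * h * pd l (pd k F) (p + \<sigma> *\<^sub>R ek + \<tau> *\<^sub>R el)"
    using \<tau>(3) by simp
  finally show ?thesis using \<sigma> \<tau> unfolding ek_def el_def by blast
qed

lemma abs_contra:
  fixes a b c d :: real
  assumes 1: "\<bar>a - c\<bar> < \<bar>c - d\<bar> / 2" and 2: "\<bar>b - d\<bar> < \<bar>c - d\<bar> / 2" and 3: "a = b"
  shows False
proof -
  have "\<bar>(c - a) + (b - d)\<bar> \<le> \<bar>c - a\<bar> + \<bar>b - d\<bar>" by (rule abs_triangle_ineq)
  then have "\<bar>c - d\<bar> \<le> \<bar>a - c\<bar> + \<bar>b - d\<bar>" using 3 by (simp add: abs_minus_commute)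
  moreover have "\<bar>a - c\<bar> + \<bar>b - d\<bar> < \<bar>c - d\<bar> / 2 + \<bar>c - d\<bar> / 2"
    using 1 2 by (rule add_strict_mono)
  ultimately show False by simp
qed

lemma schwarz:
  fixes F :: "real^'m::finite \<Rightarrow> real"
  assumes U: "open U" and p: "p \<in> U"
    and d0: "\<forall>i. \<forall>y\<in>U. (\<lambda>t. F (y + t *\<^sub>R axis i 1)) differentiable (at 0)"
    and dk: "\<forall>i. \<forall>y\<in>U. (\<lambda>t. pd k F (y + t *\<^sub>R axis i 1)) differentiable (at 0)"
    and dl: "\<forall>i. \<forall>y\<in>U. (\<lambda>t. pd l F (y + t *\<^sub>R axis i 1)) differentiable (at 0)"
    and c1: "continuous_on U (pd l (pd k F))"
    and c2: "continuous_on U (pd k (pd l F))"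
  shows "pd l (pd k F) p = pd k (pd l F) p"
proof (rule ccontr)
  assume ne: "pd l (pd k F) p \<noteq> pd k (pd l F) p"
  define e where "e = \<bar>pd l (pd k F) p - pd k (pd l F) p\<bar> / 2"
  have e: "e > 0" using ne by (simp add: e_def)
  obtain r where r: "r > 0" "ball p r \<subseteq> U" using U p open_contains_ball by blast
  obtain d1 where d1: "d1 > 0" "\<And>y. y \<in> U \<Longrightarrow> dist y p < d1 \<Longrightarrow> dist (pd l (pd k F) y) (pd l (pd k F) p) < e"
    using c1 p e unfolding continuous_on_iff by metis
  obtain d2 where d2: "d2 > 0" "\<And>y. y \<in> U \<Longrightarrow> dist y p < d2 \<Longrightarrow> dist (pd k (pd l F) y) (pd k (pd l F) p) < e"
    using c2 p e unfolding continuous_on_iff by metis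
  define h where "h = min r (min d1 d2) / 4"
  have h: "h > 0" using r d1 d2 by (simp add: h_def)
  have near: "dist (p + s *\<^sub>R axis a 1 + t *\<^sub>R axis b 1) p < min r (min d1 d2)"
    if "0 \<le> s" "s \<le> h" "0 \<le> t" "t \<le> h" for s t and a b :: 'm
  proof -
    have "dist (p + s *\<^sub>R axis a 1 + t *\<^sub>R axis b 1) p = norm (s *\<^sub>R axis a (1::real) + t *\<^sub>R axis b 1)"
      by (simp add: dist_norm)
    also have "\<dots> \<le> \<bar>s\<bar> + \<bar>t\<bar>"
      using norm_triangle_ineq[of "s *\<^sub>R axis a (1::real)" "t *\<^sub>R axis b 1"] by simp
    also have "\<dots> < min r (min d1 d2)" using that h by (simp add: h_def)
    finally show ?thesis .
  qed
  have inU: "p + s *\<^sub>R axis a 1 + t *\<^sub>R axis b 1 \<in> U"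
    if "0 \<le> s" "s \<le> h" "0 \<le> t" "t \<le> h" for s t and a b :: 'm
  proof -
    have "dist p (p + s *\<^sub>R axis a 1 + t *\<^sub>R axis b 1) < r"
      using near[OF that, of a b] by (simp add: dist_commute)
    then show ?thesis using r(2) by auto
  qed
  obtain \<sigma> \<tau> where st: "0 < \<sigma>" "\<sigma> < h" "0 < \<tau>" "\<tau> < h"
    "F (p + h *\<^sub>R axis k 1 + h *\<^sub>R axis l 1) - F (p + h *\<^sub>R axis k 1) - F (p + h *\<^sub>R axis l 1) + F p
     = h * h * pd l (pd k F) (p + \<sigma> *\<^sub>R axis k 1 + \<tau> *\<^sub>R axis l 1)"
    using mixed_mvt[OF d0 dk h, of p l] inU by blast
  obtain \<sigma>' \<tau>' where st': "0 < \<sigma>'" "\<sigma>' < h" "0 < \<tau>'" "\<tau>' < h"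
    "F (p + h *\<^sub>R axis l 1 + h *\<^sub>R axis k 1) - F (p + h *\<^sub>R axis l 1) - F (p + h *\<^sub>R axis k 1) + F p
     = h * h * pd k (pd l F) (p + \<sigma>' *\<^sub>R axis l 1 + \<tau>' *\<^sub>R axis k 1)"
    using mixed_mvt[OF d0 dl h, of p k] inU by blast
  have "h * h * pd l (pd k F) (p + \<sigma> *\<^sub>R axis k 1 + \<tau> *\<^sub>R axis l 1)
      = h * h * pd k (pd l F) (p + \<sigma>' *\<^sub>R axis l 1 + \<tau>' *\<^sub>R axis k 1)"
  proof -
    have "F (p + h *\<^sub>R axis l 1 + h *\<^sub>R axis k 1) = F (p + h *\<^sub>R axis k 1 + h *\<^sub>R axis l 1)"
      by (simp add: add_ac)
    then show ?thesis using st(5) st'(5) by linarith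
  qed
  then have eq: "pd l (pd k F) (p + \<sigma> *\<^sub>R axis k 1 + \<tau> *\<^sub>R axis l 1)
      = pd k (pd l F) (p + \<sigma>' *\<^sub>R axis l 1 + \<tau>' *\<^sub>R axis k 1)"
    using h by simp
  have "dist (pd l (pd k F) (p + \<sigma> *\<^sub>R axis k 1 + \<tau> *\<^sub>R axis l 1)) (pd l (pd k F) p) < e"
    apply (rule d1(2))
    using inU[of \<sigma> \<tau> k l] near[of \<sigma> \<tau> k l] st by auto
  moreover have "dist (pd k (pd l F) (p + \<sigma>' *\<^sub>R axis l 1 + \<tau>' *\<^sub>R axis k 1)) (pd k (pd l F) p) < e"
    apply (rule d2(2))
    using inU[of \<sigma>' \<tau>' l k] near[of \<sigma>' \<tau>' l k] st' by auto
  moreover note abs_contra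
  ultimately show False using eq unfolding e_def dist_real_def by blast
qed



lemma pair_sum:
  fixes w :: "'k::{finite,linorder} \<Rightarrow> 'k \<Rightarrow> real"
  shows "(\<Sum>(i,j)\<in>{(i,j). i < j}. w i j + w j i) = (\<Sum>i\<in>UNIV. \<Sum>j\<in>UNIV. w i j) - (\<Sum>i\<in>UNIV. w i i)"
proof -
  define A where "A = {(i::'k,j). i < j}"
  define B where "B = {(i::'k,j). j < i}"
  define D where "D = {(i::'k,j). i = j}"
  have U: "(UNIV :: ('k \<times> 'k) set) = (A \<union> B) \<union> D"
    by (auto simp: A_def B_def D_def)
  have "(\<Sum>i\<in>UNIV. \<Sum>j\<in>UNIV. w i j) = (\<Sum>(i,j)\<in>UNIV. w i j)"
    by (simp add: sum.cartesian_product)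
  also have "\<dots> = (\<Sum>(i,j)\<in>A. w i j) + (\<Sum>(i,j)\<in>B. w i j) + (\<Sum>(i,j)\<in>D. w i j)"
    unfolding U
    by (subst sum.union_disjoint, simp, simp, force simp: A_def B_def D_def)
       (subst sum.union_disjoint, auto simp: A_def B_def D_def)
  also have "(\<Sum>(i,j)\<in>B. w i j) = (\<Sum>(i,j)\<in>A. w j i)"
    by (rule sum.reindex_bij_witness[where i=prod.swap and j=prod.swap]) (auto simp: A_def B_def)
  also have "(\<Sum>(i,j)\<in>D. w i j) = (\<Sum>i\<in>UNIV. w i i)"
    by (rule sum.reindex_bij_witness[where i="\<lambda>i. (i,i)" and j=fst]) (auto simp: D_def)
  finally show ?thesis
    by (simp add: A_def sum.distrib split_beta)
qed

lemma opt_sum: "(\<Sum>k\<in>(UNIV::'n::finite option set). F k) = F None + (\<Sum>i\<in>UNIV. F (Some i))"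
  by (simp add: UNIV_option_conv sum.reindex)

lemma lift_None [simp]: "lift x $ None = 1 - (\<Sum>j\<in>UNIV. x$j)"
  by (simp add: lift_def)
lemma lift_Some [simp]: "lift x $ Some i = x $ i"
  by (simp add: lift_def)

lemma card_opt: "real CARD('n::finite option) = real CARD('n) + 1"
proof -
  have "CARD('n option) = card (insert None (range (Some :: 'n \<Rightarrow> _)))"
    by (simp add: UNIV_option_conv)
  also have "\<dots> = Suc (card (range (Some :: 'n \<Rightarrow> _)))"
    by (subst card_insert_disjoint) auto
  also have "card (range (Some :: 'n \<Rightarrow> _)) = CARD('n)"
    by (simp add: card_image)
  finally show ?thesis by simp
qed

lemma final_poly:
  fixes S T1 T2 C C2 Q X2 Bx Bs bN aN n m :: real
  shows "(1/2) * ((0 + (1 - S) * (aN * S - C)) + ((1 - S) * (T1 - C) + (S * T1 - Q)))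
     - (m/4) * ((0 + bN * (n * (1 - S) - S)) + ((Bx - (1 - S) * Bs) + (n * Bx - S * Bs)))
   = ((1/2) * (T1 - T2) - (C - C2) + (1/2) * aN * (S - X2))
     - (1/2) * ((Q - S * C - C * S + S * S * aN) - (T2 - 2 * C2 + aN * X2))
     + (m/4) * (Bs - (n + 1) * Bx - n * bN + (n + 1) * S * bN)"
  by (simp add: field_simps)

lemma alg:
  fixes x :: "real^('n::{finite,linorder})" and a :: "'n option \<Rightarrow> 'n option \<Rightarrow> real"
    and b :: "'n option \<Rightarrow> real" and m :: real
  assumes sym: "\<And>k l. a k l = a l k"
  shows "(1/2) * (\<Sum>(i,j)\<in>{(i,j). i < j}. lift x$i * lift x$j * (a i i - a i j - a j i + a j j))
     - (m/4) * (\<Sum>(i,j)\<in>{(i,j). i < j}. (lift x$i - lift x$j) * (b i - b j))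
   = (\<Sum>i\<in>UNIV. (1/2) * x$i * (1 - x$i) * (a (Some i) (Some i) - a None (Some i) - a (Some i) None + a None None))
     - (\<Sum>(i,j)\<in>{(i,j). i < j}. x$i * x$j * (a (Some i) (Some j) - a None (Some j) - a (Some i) None + a None None))
     + ((m/4 * (real CARD('n option) - 1)) / real CARD('n)) * (\<Sum>i\<in>UNIV. (1 - (real CARD('n) + 1) * x$i) * (b (Some i) - b None))"
proof -
  define S where "S = (\<Sum>j\<in>UNIV. x$j)"
  define c where "c i = a (Some i) None" for i
  define A where "A i j = a (Some i) (Some j)" for i j
  define aN where "aN = a None None"
  define bN where "bN = b None"
  define bs where "bs i = b (Some i)" for i
  define n where "n = real CARD('n)"
  define T1 where "T1 = (\<Sum>i\<in>UNIV. x$i * A i i)"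
  define T2 where "T2 = (\<Sum>i\<in>UNIV. x$i * x$i * A i i)"
  define C where "C = (\<Sum>i\<in>UNIV. x$i * c i)"
  define C2 where "C2 = (\<Sum>i\<in>UNIV. x$i * x$i * c i)"
  define Q where "Q = (\<Sum>i\<in>UNIV. \<Sum>j\<in>UNIV. x$i * x$j * A i j)"
  define X2 where "X2 = (\<Sum>i\<in>UNIV. x$i * x$i)"
  define Bx where "Bx = (\<Sum>i\<in>UNIV. x$i * bs i)"
  define Bs where "Bs = (\<Sum>i\<in>UNIV. bs i)"
  have ca: "a None (Some i) = c i" for i using sym c_def by simp
  have Asym: "A i j = A j i" for i j using sym A_def by simp
  have ln: "lift x $ None = 1 - S" by (simp add: S_def)
  define w where "w k l = lift x$k * lift x$l * (a k k - a k l)" for k l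
  have E1: "(\<Sum>(i,j)\<in>{(i,j). i < j}. lift x$i * lift x$j * (a i i - a i j - a j i + a j j))
      = (\<Sum>(i,j)\<in>{(i,j). i < j}. w i j + w j i)"
    by (rule sum.cong) (auto simp: w_def algebra_simps)
  also have "\<dots> = (\<Sum>k\<in>UNIV. \<Sum>l\<in>UNIV. w k l) - (\<Sum>k\<in>UNIV. w k k)" by (rule pair_sum)
  also have "(\<Sum>k\<in>UNIV. w k k) = 0" by (simp add: w_def)
  also have "(\<Sum>k\<in>UNIV. \<Sum>l\<in>UNIV. w k l) = (w None None + (\<Sum>j\<in>UNIV. w None (Some j)))
      + (\<Sum>i\<in>UNIV. w (Some i) None + (\<Sum>j\<in>UNIV. w (Some i) (Some j)))"
    by (simp add: opt_sum)
  also have "w None None = 0" by (simp add: w_def)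
  also have "(\<Sum>j\<in>UNIV. w None (Some j)) = (1 - S) * (\<Sum>j\<in>UNIV. x$j * (aN - c j))"
    by (simp del: lift_None add: w_def ln ca aN_def sum_distrib_left mult_ac)
  also have "(\<Sum>j\<in>UNIV. x$j * (aN - c j)) = aN * S - C"
    by (simp add: S_def C_def sum_subtractf sum_distrib_left algebra_simps)
  also have "(\<Sum>i\<in>UNIV. w (Some i) None + (\<Sum>j\<in>UNIV. w (Some i) (Some j))) = (1 - S) * (T1 - C) + (S * T1 - Q)"
    by (simp add: w_def ln A_def c_def T1_def C_def Q_def S_def sum.distrib sum_subtractf
        sum_distrib_left sum_distrib_right algebra_simps)
  finally have BEP2: "(\<Sum>(i,j)\<in>{(i,j). i < j}. lift x$i * lift x$j * (a i i - a i j - a j i + a j j))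
      = (0 + (1 - S) * (aN * S - C)) + ((1 - S) * (T1 - C) + (S * T1 - Q))" by simp
  define v where "v k l = (lift x$k - lift x$l) * b k" for k l
  have "(\<Sum>(i,j)\<in>{(i,j). i < j}. (lift x$i - lift x$j) * (b i - b j))
      = (\<Sum>(i,j)\<in>{(i,j). i < j}. v i j + v j i)"
    by (rule sum.cong) (auto simp: v_def algebra_simps)
  also have "\<dots> = (\<Sum>k\<in>UNIV. \<Sum>l\<in>UNIV. v k l) - (\<Sum>k\<in>UNIV. v k k)" by (rule pair_sum)
  also have "(\<Sum>k\<in>UNIV. v k k) = 0" by (simp add: v_def)
  also have "(\<Sum>k\<in>UNIV. \<Sum>l\<in>UNIV. v k l) = (v None None + (\<Sum>j\<in>UNIV. v None (Some j)))
      + (\<Sum>i\<in>UNIV. v (Some i) None + (\<Sum>j\<in>UNIV. v (Some i) (Some j)))"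
    by (simp add: opt_sum)
  also have "v None None = 0" by (simp add: v_def)
  also have "(\<Sum>j\<in>UNIV. v None (Some j)) = bN * (\<Sum>j\<in>UNIV. (1 - S) - x$j)"
    by (simp del: lift_None add: v_def ln bN_def sum_distrib_left mult_ac)
  also have "(\<Sum>j\<in>UNIV. (1 - S) - x$j) = n * (1 - S) - S"
    by (simp add: sum_subtractf n_def S_def)
  also have "(\<Sum>i\<in>UNIV. v (Some i) None + (\<Sum>j\<in>UNIV. v (Some i) (Some j))) = (Bx - (1 - S) * Bs) + (n * Bx - S * Bs)"
    by (simp add: v_def ln bs_def n_def Bx_def Bs_def S_def sum.distrib sum_subtractf
        sum_distrib_left sum_distrib_right algebra_simps)
  finally have BEP1: "(\<Sum>(i,j)\<in>{(i,j). i < j}. (lift x$i - lift x$j) * (b i - b j))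
      = (0 + bN * (n * (1 - S) - S)) + ((Bx - (1 - S) * Bs) + (n * Bx - S * Bs))" by simp
  have WF1: "(\<Sum>i\<in>UNIV. (1/2) * x$i * (1 - x$i) * (a (Some i) (Some i) - a None (Some i) - a (Some i) None + a None None))
      = (1/2) * (T1 - T2) - (C - C2) + (1/2) * aN * (S - X2)"
  proof -
    have "(\<Sum>i\<in>UNIV. (1/2) * x$i * (1 - x$i) * (a (Some i) (Some i) - a None (Some i) - a (Some i) None + a None None))
      = (\<Sum>i\<in>UNIV. (1/2) * (x$i * A i i) - (1/2) * (x$i * x$i * A i i) - x$i * c i + x$i * x$i * c i
           + ((1/2) * aN) * x$i - ((1/2) * aN) * (x$i * x$i))"
      by (rule sum.cong) (simp_all add: ca A_def c_def aN_def field_simps)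
    also have "\<dots> = (1/2) * T1 - (1/2) * T2 - C + C2 + ((1/2) * aN) * S - ((1/2) * aN) * X2"
      unfolding T1_def T2_def C_def C2_def S_def X2_def
      by (simp only: sum.distrib sum_subtractf sum_distrib_left)
    also have "\<dots> = (1/2) * (T1 - T2) - (C - C2) + (1/2) * aN * (S - X2)"
      by (simp add: field_simps)
    finally show ?thesis .
  qed
  define w2 where "w2 i j = x$i * x$j * (A i j - c j - c i + aN)" for i j
  have "(\<Sum>(i,j)\<in>{(i,j). i < j}. x$i * x$j * (a (Some i) (Some j) - a None (Some j) - a (Some i) None + a None None))
      = (\<Sum>(i,j)\<in>{(i,j). i < j}. (1/2) * (w2 i j + w2 j i))"
    by (rule sum.cong) (auto simp: w2_def ca A_def[symmetric] c_def[symmetric] aN_def[symmetric] Asym[of _ i for i] algebra_simps)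
  also have "\<dots> = (1/2) * (\<Sum>(i,j)\<in>{(i,j). i < j}. w2 i j + w2 j i)"
    by (simp add: sum_distrib_left case_prod_beta)
  also have "(\<Sum>(i,j)\<in>{(i,j). i < j}. w2 i j + w2 j i) = (\<Sum>i\<in>UNIV. \<Sum>j\<in>UNIV. w2 i j) - (\<Sum>i\<in>UNIV. w2 i i)" by (rule pair_sum)
  also have "(\<Sum>i\<in>UNIV. \<Sum>j\<in>UNIV. w2 i j) = (\<Sum>i\<in>UNIV. \<Sum>j\<in>UNIV. x$i * x$j * A i j) - (\<Sum>i\<in>UNIV. \<Sum>j\<in>UNIV. x$i * x$j * c j)
       - (\<Sum>i\<in>UNIV. \<Sum>j\<in>UNIV. x$i * x$j * c i) + (\<Sum>i\<in>UNIV. \<Sum>j\<in>UNIV. x$i * x$j * aN)"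
    unfolding w2_def by (simp only: sum.distrib sum_subtractf distrib_left right_diff_distrib)
  also have "(\<Sum>i\<in>UNIV. \<Sum>j\<in>UNIV. x$i * x$j * c j) = S * C"
    by (simp add: S_def C_def sum_product mult.assoc)
  also have "(\<Sum>i\<in>UNIV. \<Sum>j\<in>UNIV. x$i * x$j * c i) = C * S"
  proof -
    have "(\<Sum>i\<in>UNIV. \<Sum>j\<in>UNIV. x$i * x$j * c i) = (\<Sum>i\<in>UNIV. x$i * c i * S)"
      by (simp add: S_def sum_distrib_left sum_distrib_right mult_ac)
    also have "\<dots> = C * S" by (simp add: C_def sum_distrib_right)
    finally show ?thesis .
  qed
  also have "(\<Sum>i\<in>UNIV. \<Sum>j\<in>UNIV. x$i * x$j * aN) = S * S * aN"
    by (simp add: S_def sum_distrib_left sum_distrib_right mult_ac)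
  also have "(\<Sum>i\<in>UNIV. w2 i i) = T2 - 2 * C2 + aN * X2"
  proof -
    have "(\<Sum>i\<in>UNIV. w2 i i) = (\<Sum>i\<in>UNIV. x$i * x$i * A i i - 2 * (x$i * x$i * c i) + aN * (x$i * x$i))"
      by (rule sum.cong) (simp_all add: w2_def algebra_simps)
    also have "\<dots> = T2 - 2 * C2 + aN * X2"
      unfolding T2_def C2_def X2_def by (simp only: sum.distrib sum_subtractf sum_distrib_left)
    finally show ?thesis .
  qed
  finally have WF2: "(\<Sum>(i,j)\<in>{(i,j). i < j}. x$i * x$j * (a (Some i) (Some j) - a None (Some j) - a (Some i) None + a None None))
      = (1/2) * ((Q - S * C - C * S + S * S * aN) - (T2 - 2 * C2 + aN * X2))" unfolding Q_def .
  have th: "(m/4 * (real CARD('n option) - 1)) / real CARD('n) = m/4"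
    by (simp add: card_opt)
  have WF3: "(\<Sum>i\<in>UNIV. (1 - (real CARD('n) + 1) * x$i) * (b (Some i) - b None))
      = Bs - (n + 1) * Bx - n * bN + (n + 1) * S * bN"
    by (simp add: bs_def[symmetric] bN_def[symmetric] n_def[symmetric] Bs_def Bx_def S_def
        sum.distrib sum_subtractf sum_distrib_left algebra_simps)
  show ?thesis
    unfolding BEP1 BEP2 WF1 WF2 WF3 th by (rule final_poly)
qed


lemma liftshift: "lift (y + t *\<^sub>R axis i 1) = lift y + t *\<^sub>R axis (Some i) 1 - t *\<^sub>R axis None (1::real)"
proof -
  have "(\<Sum>j\<in>UNIV. t * (if j = i then 1 else 0)) = (t::real)"
    by (simp add: sum_distrib_left[symmetric])
  then show ?thesis by (auto simp: vec_eq_iff lift_def axis_def sum.distrib split: option.split)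
qed

lemma comp_DERIV:
  fixes F :: "real^('n::finite option) \<Rightarrow> real"
  assumes U: "open U" and y: "lift y \<in> U"
    and d: "\<forall>i. \<forall>z\<in>U. (\<lambda>t. F (z + t *\<^sub>R axis i 1)) differentiable (at 0)"
    and c: "continuous_on U (pd None F)"
  shows "((\<lambda>t. F (lift (y + t *\<^sub>R axis i 1))) has_real_derivative (pd (Some i) F (lift y) - pd None F (lift y))) (at 0)"
proof -
  have "(\<lambda>t. F (lift (y + t *\<^sub>R axis i 1))) = (\<lambda>t. F (lift y + t *\<^sub>R axis (Some i) 1 - t *\<^sub>R axis None 1))"
    by (simp add: liftshift)
  then show ?thesis using dir_deriv[OF U y d c, of "Some i"] by (simp only:)
qed

lemma pd_comp:
  fixes F :: "real^('n::finite option) \<Rightarrow> real"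
  assumes U: "open U" and y: "lift y \<in> U"
    and d: "\<forall>i. \<forall>z\<in>U. (\<lambda>t. F (z + t *\<^sub>R axis i 1)) differentiable (at 0)"
    and c: "continuous_on U (pd None F)"
  shows "pd i (\<lambda>y. F (lift y)) y = pd (Some i) F (lift y) - pd None F (lift y)"
  unfolding pd_def[of i "\<lambda>y. F (lift y)"] using DERIV_imp_deriv[OF comp_DERIV[OF U y d c]] by simp

lemma ev_lift:
  fixes x :: "real^('n::finite)"
  assumes U: "open U" and x: "lift x \<in> U"
  shows "\<forall>\<^sub>F t in nhds 0. lift (x + t *\<^sub>R axis i 1) \<in> U"
proof -
  define h where "h = (\<lambda>t::real. lift x + t *\<^sub>R axis (Some i) 1 - t *\<^sub>R axis None 1)"
  have "isCont h 0" unfolding h_def by (intro continuous_intros)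
  then have "(h \<longlongrightarrow> h 0) (nhds 0)" by (simp add: isCont_def tendsto_at_iff_tendsto_nhds)
  moreover have "h 0 = lift x" by (simp add: h_def)
  ultimately have "(h \<longlongrightarrow> lift x) (nhds 0)" by simp
  from topological_tendstoD[OF this U x] show ?thesis by (simp add: liftshift h_def)
qed

theorem proposition5p3:
  fixes m :: real
    and f :: "real^(('n::{finite,linorder}) option) \<Rightarrow> real"
    and U :: "(real^(('n::{finite,linorder}) option)) set"
    and x :: "real^('n::{finite,linorder})"
  assumes "smooth_on U f"
    and "{y. \<forall>i. 0 \<le> y$i} \<subseteq> U"
    and "\<forall>i. 0 \<le> x$i"
    and "(\<Sum>j\<in>UNIV. x$j) \<le> 1"
  shows "L_BEP m f (lift x) =
         L_WF (m/4 * (real CARD('n option) - 1)) (\<lambda>y. f (lift y)) x"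
proof -
  have U: "open U" using assms(1) by (simp add: smooth_on_def)
  have cont: "continuous_on U (pds is f)" for "is" using assms(1) by (simp add: smooth_on_def)
  have dif: "\<forall>i. \<forall>y\<in>U. (\<lambda>t. pds is f (y + t *\<^sub>R axis i 1)) differentiable (at 0)" for "is"
    using assms(1) by (simp add: smooth_on_def)
  have d0: "\<forall>i. \<forall>y\<in>U. (\<lambda>t. f (y + t *\<^sub>R axis i 1)) differentiable (at 0)"
    using dif[of "[]"] by simp
  have d1: "\<forall>i. \<forall>y\<in>U. (\<lambda>t. pd k f (y + t *\<^sub>R axis i 1)) differentiable (at 0)" for k
    using dif[of "[k]"] by simp
  have c1: "continuous_on U (pd k f)" for k using cont[of "[k]"] by simp
  have c2: "continuous_on U (pd k (pd l f))" for k l using cont[of "[k, l]"] by simp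
  have P: "lift x \<in> U"
  proof -
    have "\<forall>i. 0 \<le> lift x $ i"
    proof
      fix i show "0 \<le> lift x $ i" using assms(3,4) by (cases i) auto
    qed
    then show ?thesis using assms(2) by blast
  qed
  have sym: "pd k (pd l f) (lift x) = pd l (pd k f) (lift x)" for k l
    using schwarz[OF U P d0 d1 d1 c2 c2, of l k] by simp
  have fd: "pd i (\<lambda>y. f (lift y)) x = pd (Some i) f (lift x) - pd None f (lift x)" for i
    by (rule pd_comp[OF U P d0 c1])
  have sd: "pd i (pd j (\<lambda>y. f (lift y))) x =
      pd (Some i) (pd (Some j) f) (lift x) - pd None (pd (Some j) f) (lift x)
      - pd (Some i) (pd None f) (lift x) + pd None (pd None f) (lift x)" for i j
  proof -
    have ev: "\<forall>\<^sub>F t in nhds 0. pd j (\<lambda>y. f (lift y)) (x + t *\<^sub>R axis i 1)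
        = pd (Some j) f (lift (x + t *\<^sub>R axis i 1)) - pd None f (lift (x + t *\<^sub>R axis i 1))"
      using ev_lift[OF U P, of i] by eventually_elim (rule pd_comp[OF U _ d0 c1])
    have D: "((\<lambda>t. pd (Some j) f (lift (x + t *\<^sub>R axis i 1)) - pd None f (lift (x + t *\<^sub>R axis i 1)))
       has_real_derivative
        ((pd (Some i) (pd (Some j) f) (lift x) - pd None (pd (Some j) f) (lift x))
        - (pd (Some i) (pd None f) (lift x) - pd None (pd None f) (lift x)))) (at 0)"
      by (intro DERIV_diff comp_DERIV[OF U P] d1 c2)
    have "((\<lambda>t. pd j (\<lambda>y. f (lift y)) (x + t *\<^sub>R axis i 1)) has_real_derivative
        ((pd (Some i) (pd (Some j) f) (lift x) - pd None (pd (Some j) f) (lift x))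
        - (pd (Some i) (pd None f) (lift x) - pd None (pd None f) (lift x)))) (at 0)"
      using DERIV_cong_ev[OF refl ev refl] D by blast
    then show ?thesis unfolding pd_def[of i] by (simp add: DERIV_imp_deriv)
  qed
  show ?thesis
    unfolding L_BEP_def L_WF_def fd sd
    by (rule alg[where a = "\<lambda>k l. pd k (pd l f) (lift x)" and b = "\<lambda>k. pd k f (lift x)", OF sym])
qed

end
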